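(* Let $f:\mathbb{R}^{d+1}\to\mathbb{R}$ be bounded and uniformly continuous, let $\{\eta_k,k\ge0\}$ be a stationary ergodic sequence of real random variables, and let $\{\xi_n(t),t\ge0\}_{n\ge1}$ be continuous $\mathbb{R}^d$-valued processes, defined on the same probability space as $\{\eta_k\}$, such that for some process $\xi(t)$, $t\ge0$, and every $T>0$, $\lim_{n\to\infty}\sup_{t\in[0,T]}|\xi_n(t)-\xi(t)|=0$ almost surely. Then for every $T>0$, $$\frac1n\sum_{k\le nT}f\Big(\xi_n\big(\tfrac kn\big),\eta_k\Big)\ \longrightarrow\ \int_0^T\bar f(\xi(t))\,dt\quad\text{almost surely as }n\to\infty,$$ where $\bar f(x)=\mathbb{E}f(x,\eta_0)$. *)

theory Defs
  imports "HOL-Probability.Probability"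
begin

abbreviation seq_space :: "(nat \<Rightarrow> real) measure" where
  "seq_space \<equiv> PiM UNIV (\<lambda>_. borel)"

definition stationary_seq :: "'a measure \<Rightarrow> (nat \<Rightarrow> 'a \<Rightarrow> real) \<Rightarrow> bool" where
  "stationary_seq M \<eta> \<longleftrightarrow>
     (\<forall>k. \<eta> k \<in> borel_measurable M) \<and>
     (\<forall>m. distr M seq_space (\<lambda>\<omega> k. \<eta> (k + m) \<omega>) = distr M seq_space (\<lambda>\<omega> k. \<eta> k \<omega>))"

definition ergodic_seq :: "'a measure \<Rightarrow> (nat \<Rightarrow> 'a \<Rightarrow> real) \<Rightarrow> bool" where
  "ergodic_seq M \<eta> \<longleftrightarrow>
     (\<forall>A \<in> sets seq_space.
        (\<lambda>x k. x (Suc k)) -` A \<inter> space seq_space = A \<longrightarrow>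
        measure M {\<omega> \<in> space M. (\<lambda>k. \<eta> k \<omega>) \<in> A} \<in> {0, 1})"

end

theory Submission
  imports Defs
begin


fun Mx :: "(real \<Rightarrow> real) \<Rightarrow> real \<Rightarrow> nat \<Rightarrow> (nat \<Rightarrow> real) \<Rightarrow> real" where
  "Mx g c 0 x = 0"
| "Mx g c (Suc n) x = max 0 (g (x 0) - c + Mx g c n (\<lambda>k. x (Suc k)))"

lemma Mx_nonneg: "0 \<le> Mx g c n x" by (cases n) auto

lemma Mx_mono: "Mx g c n x \<le> Mx g c (Suc n) x"
proof (induction n arbitrary: x)
  case 0 then show ?case by simp
next
  case (Suc n)
  have e1: "Mx g c (Suc n) x = max 0 (g (x 0) - c + Mx g c n (\<lambda>k. x (Suc k)))" by simp
  have e2: "Mx g c (Suc (Suc n)) x = max 0 (g (x 0) - c + Mx g c (Suc n) (\<lambda>k. x (Suc k)))" by (rule Mx.simps(2))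
  show ?case unfolding e1 e2 using Suc.IH[of "\<lambda>k. x (Suc k)"] by (intro max.mono) simp_all
qed

lemma Mx_ge: "1 \<le> k \<Longrightarrow> k \<le> n \<Longrightarrow> (\<Sum>i<k. g (x i) - c) \<le> Mx g c n x"
proof (induction n arbitrary: k x)
  case 0 then show ?case by simp
next
  case (Suc n)
  show ?case
  proof (cases "k = 1")
    case True then show ?thesis using Mx_nonneg[of g c n "\<lambda>k. x (Suc k)"] by simp
  next
    case False
    then obtain k' where k: "k = Suc k'" "1 \<le> k'" "k' \<le> n" using Suc.prems by (cases k) auto
    have "(\<Sum>i<k. g (x i) - c) = (g (x 0) - c) + (\<Sum>i<k'. g (x (Suc i)) - c)"
      unfolding k sum.lessThan_Suc_shift by simp
    also have "\<dots> \<le> (g (x 0) - c) + Mx g c n (\<lambda>i. x (Suc i))"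
      using Suc.IH[of k' "\<lambda>i. x (Suc i)"] k by simp
    finally show ?thesis by simp
  qed
qed

lemma Mx_bound: assumes "\<And>y. \<bar>g y - c\<bar> \<le> K" shows "\<bar>Mx g c n x\<bar> \<le> real n * K"
proof (induction n arbitrary: x)
  case 0 then show ?case by simp
next
  case (Suc n)
  have K: "0 \<le> K" using assms[of 0] by simp
  have a: "g (x 0) - c \<le> K" using assms[of "x 0"] by (simp add: abs_le_iff)
  have b: "Mx g c n (\<lambda>k. x (Suc k)) \<le> real n * K" using Suc.IH[of "\<lambda>k. x (Suc k)"] by (simp add: abs_le_iff)
  have "Mx g c (Suc n) x \<le> max 0 (K + real n * K)"
    unfolding Mx.simps by (rule max.mono) (use a b in linarith)+
  also have "\<dots> = real (Suc n) * K" using K by (simp add: algebra_simps)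
  finally have "Mx g c (Suc n) x \<le> real (Suc n) * K" .
  moreover have "0 \<le> Mx g c (Suc n) x" by (rule Mx_nonneg)
  ultimately show ?case by (simp only: abs_of_nonneg)
qed

lemma shift_measurable: "(\<lambda>x k. x (Suc k)) \<in> measurable seq_space seq_space"
  by (rule measurable_PiM_single') auto

lemma Mx_measurable[measurable]:
  assumes [measurable]: "g \<in> borel_measurable borel"
  shows "Mx g c n \<in> borel_measurable seq_space"
proof (induction n)
  case 0 then show ?case by simp
next
  case (Suc n)
  have [measurable]: "(\<lambda>x. Mx g c n (\<lambda>k. x (Suc k))) \<in> borel_measurable seq_space"
    using measurable_compose[OF shift_measurable Suc.IH] by simp
  show ?case by simp
qed

lemma stat_meas: assumes "stationary_seq M \<eta>" shows "\<eta> k \<in> borel_measurable M"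
  using assms unfolding stationary_seq_def by auto

lemma seq_meas: assumes "stationary_seq M \<eta>" shows "(\<lambda>\<omega> k. \<eta> (k + m) \<omega>) \<in> measurable M seq_space"
  by (rule measurable_PiM_single') (auto intro: stat_meas[OF assms])

lemma maximal_ergodic:
  fixes g :: "real \<Rightarrow> real"
  assumes P: "prob_space M" and st: "stationary_seq M \<eta>" and g[measurable]: "g \<in> borel_measurable borel"
    and K: "\<And>y. \<bar>g y - c\<bar> \<le> K"
  shows "0 \<le> integral\<^sup>L M (\<lambda>\<omega>. if 0 < Mx g c n (\<lambda>k. \<eta> k \<omega>) then g (\<eta> 0 \<omega>) - c else 0)"
proof -
  interpret prob_space M by fact
  have eta[measurable]: "\<And>k. \<eta> k \<in> borel_measurable M" using st by (rule stat_meas)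
  define X where "X = (\<lambda>\<omega> k. \<eta> (k+0) \<omega>)"
  define Y where "Y = (\<lambda>\<omega> k. \<eta> (k+1) \<omega>)"
  have X[measurable]: "X \<in> measurable M seq_space" unfolding X_def by (rule seq_meas[OF st])
  have Y[measurable]: "Y \<in> measurable M seq_space" unfolding Y_def by (rule seq_meas[OF st])
  have d0: "distr M seq_space (\<lambda>\<omega> k. \<eta> (k+1) \<omega>) = distr M seq_space (\<lambda>\<omega> k. \<eta> k \<omega>)"
    using st unfolding stationary_seq_def by blast
  have d: "distr M seq_space Y = distr M seq_space X" unfolding X_def Y_def using d0 by simp
  have Mm[measurable]: "Mx g c n \<in> borel_measurable seq_space" by (rule Mx_measurable[OF g])
  have eqi: "integral\<^sup>L M (\<lambda>\<omega>. Mx g c n (Y \<omega>)) = integral\<^sup>L M (\<lambda>\<omega>. Mx g c n (X \<omega>))"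
    using integral_distr[OF Y Mm] integral_distr[OF X Mm] d by simp
  define Ind where "Ind \<omega> = (if 0 < Mx g c n (X \<omega>) then g (\<eta> 0 \<omega>) - c else 0)" for \<omega>
  have pw: "Mx g c n (X \<omega>) \<le> Ind \<omega> + Mx g c n (Y \<omega>)" for \<omega>
  proof -
    have "Mx g c n (X \<omega>) \<le> Mx g c (Suc n) (X \<omega>)" by (rule Mx_mono)
    also have "\<dots> = max 0 (g (\<eta> 0 \<omega>) - c + Mx g c n (Y \<omega>))" by (simp add: X_def Y_def)
    finally show ?thesis using Mx_nonneg[of g c n "Y \<omega>"] Mx_nonneg[of g c n "X \<omega>"]
      unfolding Ind_def by (auto simp: max_def split: if_splits)
  qed
  have iX: "integrable M (\<lambda>\<omega>. Mx g c n (X \<omega>))"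
    by (rule integrable_const_bound[where B="real n * K"]) (auto simp: Mx_bound[OF K])
  have iY: "integrable M (\<lambda>\<omega>. Mx g c n (Y \<omega>))"
    by (rule integrable_const_bound[where B="real n * K"]) (auto simp: Mx_bound[OF K])
  have XM[measurable]: "(\<lambda>\<omega>. Mx g c n (X \<omega>)) \<in> borel_measurable M" using measurable_compose[OF X Mm] .
  have Ib: "\<bar>Ind \<omega>\<bar> \<le> K" for \<omega> using K[of "\<eta> 0 \<omega>"] K[of 0] unfolding Ind_def by auto
  have Im: "Ind \<in> borel_measurable M" unfolding Ind_def by measurable
  have iI: "integrable M Ind"
    by (rule integrable_const_bound[where B="K"]) (simp_all add: Ib Im)
  have "integral\<^sup>L M (\<lambda>\<omega>. Mx g c n (X \<omega>)) \<le> integral\<^sup>L M (\<lambda>\<omega>. Ind \<omega> + Mx g c n (Y \<omega>))"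
    by (rule integral_mono[OF iX _ pw]) (use iI iY in auto)
  also have "\<dots> = integral\<^sup>L M Ind + integral\<^sup>L M (\<lambda>\<omega>. Mx g c n (X \<omega>))"
    using iI iY eqi by simp
  finally have "0 \<le> integral\<^sup>L M Ind" by simp
  then show ?thesis unfolding Ind_def X_def by simp
qed

lemma maximal_consequence:
  fixes g :: "real \<Rightarrow> real"
  assumes P: "prob_space M" and st: "stationary_seq M \<eta>" and g[measurable]: "g \<in> borel_measurable borel"
    and K: "\<And>y. \<bar>g y - c\<bar> \<le> K"
    and ae: "AE \<omega> in M. \<exists>k\<ge>1. 0 < (\<Sum>i<k. g (\<eta> i \<omega>) - c)"
  shows "c \<le> prob_space.expectation M (\<lambda>\<omega>. g (\<eta> 0 \<omega>))"
proof -
  interpret prob_space M by fact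
  have eta[measurable]: "\<And>k. \<eta> k \<in> borel_measurable M" using st by (rule stat_meas)
  have X[measurable]: "(\<lambda>\<omega> k. \<eta> (k+0) \<omega>) \<in> measurable M seq_space" by (rule seq_meas[OF st])
  define s where "s n \<omega> = (if 0 < Mx g c n (\<lambda>k. \<eta> k \<omega>) then g (\<eta> 0 \<omega>) - c else 0)" for n \<omega>
  have sm[measurable]: "s n \<in> borel_measurable M" for n
  proof -
    have "(\<lambda>\<omega>. Mx g c n (\<lambda>k. \<eta> (k+0) \<omega>)) \<in> borel_measurable M"
      using measurable_compose[OF X Mx_measurable[OF g]] .
    then have [measurable]: "(\<lambda>\<omega>. Mx g c n (\<lambda>k. \<eta> k \<omega>)) \<in> borel_measurable M" by simp
    show ?thesis unfolding s_def by measurable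
  qed
  have lim: "(\<lambda>n. integral\<^sup>L M (s n)) \<longlonglongrightarrow> integral\<^sup>L M (\<lambda>\<omega>. g (\<eta> 0 \<omega>) - c)"
  proof (rule integral_dominated_convergence[where w="\<lambda>_. K"])
    show "AE x in M. (\<lambda>i. s i x) \<longlonglongrightarrow> g (\<eta> 0 x) - c"
      using ae
    proof eventually_elim
      case (elim \<omega>)
      then obtain k where k: "k \<ge> 1" "0 < (\<Sum>i<k. g (\<eta> i \<omega>) - c)" by auto
      have "eventually (\<lambda>n. s n \<omega> = g (\<eta> 0 \<omega>) - c) sequentially"
        unfolding eventually_sequentially
      proof (intro exI[of _ k] allI impI)
        fix n assume "k \<le> n"
        then have "0 < Mx g c n (\<lambda>i. \<eta> i \<omega>)" using Mx_ge[OF k(1), of n g "\<lambda>i. \<eta> i \<omega>" c] k(2) by simp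
        then show "s n \<omega> = g (\<eta> 0 \<omega>) - c" by (simp add: s_def)
      qed
      then show ?case by (rule tendsto_eventually)
    qed
    show "AE x in M. norm (s i x) \<le> K" for i using K by (auto simp: s_def order_trans[OF _ K])
  qed auto
  have "0 \<le> integral\<^sup>L M (\<lambda>\<omega>. g (\<eta> 0 \<omega>) - c)"
    by (rule LIMSEQ_le_const[OF lim]) (unfold s_def, use maximal_ergodic[OF P st g K] in blast)
  moreover have "integrable M (\<lambda>\<omega>. g (\<eta> 0 \<omega>))"
  proof (rule integrable_const_bound[where B="\<bar>c\<bar> + K"])
    have "\<bar>g (\<eta> 0 \<omega>)\<bar> \<le> \<bar>c\<bar> + K" for \<omega> using K[of "\<eta> 0 \<omega>"] by (smt (verit))
    then show "AE x in M. norm (g (\<eta> 0 x)) \<le> \<bar>c\<bar> + K" by simp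
  qed simp
  ultimately show ?thesis by (simp add: prob_space)
qed

definition Avg :: "(real \<Rightarrow> real) \<Rightarrow> nat \<Rightarrow> (nat \<Rightarrow> real) \<Rightarrow> real" where
  "Avg g n x = (1 / real n) * (\<Sum>k<n. g (x k))"

lemma Avg_bound: assumes "\<And>y. \<bar>g y\<bar> \<le> K" shows "\<bar>Avg g n x\<bar> \<le> K"
proof (cases "n = 0")
  case True then show ?thesis using assms[of 0] by (simp add: Avg_def)
next
  case False
  have "\<bar>\<Sum>k<n. g (x k)\<bar> \<le> (\<Sum>k<n. \<bar>g (x k)\<bar>)" by (rule sum_abs)
  also have "\<dots> \<le> (\<Sum>k<n. K)" by (rule sum_mono) (rule assms)
  finally have "\<bar>\<Sum>k<n. g (x k)\<bar> \<le> real n * K" by simp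
  then show ?thesis using False by (simp add: Avg_def abs_mult field_simps)
qed

lemma Avg_shift: "Avg g (Suc n) x - Avg g n (\<lambda>k. x (Suc k)) = (g (x 0) - Avg g n (\<lambda>k. x (Suc k))) / (real n + 1)"
proof (cases "n = 0")
  case True then show ?thesis by (simp add: Avg_def)
next
  case False
  have "Avg g (Suc n) x = (g (x 0) + (\<Sum>k<n. g (x (Suc k)))) / (real n + 1)"
    unfolding Avg_def sum.lessThan_Suc_shift by simp
  then show ?thesis using False unfolding Avg_def by (simp add: field_simps)
qed

lemma limsup_Avg_shift:
  assumes "\<And>y. \<bar>g y\<bar> \<le> K"
  shows "limsup (\<lambda>n. ereal (Avg g n (\<lambda>k. x (Suc k)))) = limsup (\<lambda>n. ereal (Avg g n x))"
proof -
  define d where "d n = Avg g (Suc n) x - Avg g n (\<lambda>k. x (Suc k))" for n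
  have K: "0 \<le> K" using assms[of 0] by simp
  have "d \<longlonglongrightarrow> 0"
  proof (rule Lim_null_comparison)
    show "\<forall>\<^sub>F n in sequentially. norm (d n) \<le> 2 * K / (real n + 1)"
    proof (intro always_eventually allI)
      fix n
      have "\<bar>g (x 0) - Avg g n (\<lambda>k. x (Suc k))\<bar> \<le> 2 * K"
        using assms[of "x 0"] Avg_bound[of g K n "\<lambda>k. x (Suc k)", OF assms] by simp
      then show "norm (d n) \<le> 2 * K / (real n + 1)"
        unfolding d_def Avg_shift by (simp add: divide_right_mono)
    qed
    show "(\<lambda>n. 2 * K / (real n + 1)) \<longlonglongrightarrow> 0"
      using LIMSEQ_Suc[OF lim_const_over_n[of "2*K"]] by (simp add: add.commute)
  qed
  then have d0: "(\<lambda>n. ereal (d n)) \<longlonglongrightarrow> ereal 0" by (simp add: lim_ereal)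
  have "limsup (\<lambda>n. ereal (Avg g n x)) = limsup (\<lambda>n. ereal (Avg g (n+1) x))"
    by (rule limsup_shift[symmetric])
  also have "\<dots> = limsup (\<lambda>n. ereal (d n) + ereal (Avg g n (\<lambda>k. x (Suc k))))"
    by (simp add: d_def)
  also have "\<dots> = ereal 0 + limsup (\<lambda>n. ereal (Avg g n (\<lambda>k. x (Suc k))))"
    by (rule ereal_limsup_lim_add[OF d0]) simp
  finally show ?thesis by (simp add: zero_ereal_def[symmetric])
qed

lemma birk_upper:
  fixes g :: "real \<Rightarrow> real"
  assumes P: "prob_space M" and st: "stationary_seq M \<eta>" and erg: "ergodic_seq M \<eta>"
    and g[measurable]: "g \<in> borel_measurable borel"
    and Kg: "\<And>y. \<bar>g y\<bar> \<le> K"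
    and c: "prob_space.expectation M (\<lambda>\<omega>. g (\<eta> 0 \<omega>)) < c"
  shows "AE \<omega> in M. eventually (\<lambda>n. (1/real n) * (\<Sum>k<n. g (\<eta> k \<omega>)) < c) sequentially"
proof -
  interpret prob_space M by fact
  define E where "E = expectation (\<lambda>\<omega>. g (\<eta> 0 \<omega>))"
  define c' where "c' = (E + c) / 2"
  have c'E: "E < c'" "c' < c" using c unfolding c'_def E_def by auto
  have Kc: "\<bar>g y - c'\<bar> \<le> K + \<bar>c'\<bar>" for y using Kg[of y] by (smt (verit))
  have eta[measurable]: "\<And>k. \<eta> k \<in> borel_measurable M" using st by (rule stat_meas)
  have X[measurable]: "(\<lambda>\<omega> k. \<eta> (k+0) \<omega>) \<in> measurable M seq_space" by (rule seq_meas[OF st])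
  then have X'[measurable]: "(\<lambda>\<omega> k. \<eta> k \<omega>) \<in> measurable M seq_space" by simp
  define L where "L x = limsup (\<lambda>n. ereal (Avg g n x))" for x
  have Lm[measurable]: "L \<in> borel_measurable seq_space" unfolding L_def Avg_def by measurable
  define B where "B = {x \<in> space seq_space. ereal c' < L x}"
  have Bs: "B \<in> sets seq_space" unfolding B_def by measurable
  have inv: "(\<lambda>x k. x (Suc k)) -` B \<inter> space seq_space = B"
    unfolding B_def L_def using limsup_Avg_shift[of g K, OF Kg] by (auto simp: space_PiM)
  define Xs where "Xs = {\<omega> \<in> space M. (\<lambda>k. \<eta> k \<omega>) \<in> B}"
  have Xs_sets: "Xs \<in> sets M" unfolding Xs_def using Bs by measurable
  have "measure M Xs \<in> {0, 1}" using erg Bs inv unfolding ergodic_seq_def Xs_def by blast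
  moreover have "measure M Xs \<noteq> 1"
  proof
    assume "measure M Xs = 1"
    then have aeX: "AE \<omega> in M. \<omega> \<in> Xs" by (rule AE_prob_1)
    have "AE \<omega> in M. \<exists>k\<ge>1. 0 < (\<Sum>i<k. g (\<eta> i \<omega>) - c')"
      using aeX
    proof eventually_elim
      case (elim \<omega>)
      then have lt: "ereal c' < L (\<lambda>k. \<eta> k \<omega>)" unfolding Xs_def B_def by auto
      have "\<exists>\<^sub>F n in sequentially. c' < Avg g n (\<lambda>k. \<eta> k \<omega>)"
      proof (rule ccontr)
        assume "\<not> ?thesis"
        then have "eventually (\<lambda>n. ereal (Avg g n (\<lambda>k. \<eta> k \<omega>)) \<le> ereal c') sequentially"
          unfolding not_frequently by (auto elim: eventually_mono)
        then have "L (\<lambda>k. \<eta> k \<omega>) \<le> ereal c'" unfolding L_def by (rule Limsup_bounded)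
        then show False using lt by simp
      qed
      then obtain n where n: "n \<ge> 1" "c' < Avg g n (\<lambda>k. \<eta> k \<omega>)"
        unfolding frequently_sequentially by auto
      then have "real n * c' < (\<Sum>k<n. g (\<eta> k \<omega>))" unfolding Avg_def by (simp add: field_simps)
      then have "0 < (\<Sum>i<n. g (\<eta> i \<omega>) - c')" by (simp add: sum_subtractf)
      then show ?case using n(1) by blast
    qed
    then have "c' \<le> E" unfolding E_def
      by (rule maximal_consequence[OF P st g, where K="K + \<bar>c'\<bar>", rotated]) (rule Kc)
    then show False using c'E by simp
  qed
  ultimately have "measure M Xs = 0" by simp
  then have "Xs \<in> null_sets M" using Xs_sets by (simp add: null_sets_def emeasure_eq_measure)
  then have "AE \<omega> in M. \<omega> \<notin> Xs" by (rule AE_not_in)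
  with AE_space show ?thesis
  proof eventually_elim
    case (elim \<omega>)
    then have "L (\<lambda>k. \<eta> k \<omega>) \<le> ereal c'" using elim unfolding Xs_def B_def by (auto simp: space_PiM not_less)
    then have "L (\<lambda>k. \<eta> k \<omega>) < ereal c" using c'E by (simp add: le_less_trans)
    then have "eventually (\<lambda>n. ereal (Avg g n (\<lambda>k. \<eta> k \<omega>)) < ereal c) sequentially"
      unfolding L_def by (rule Limsup_lessD)
    then show ?case by (rule eventually_mono) (simp add: Avg_def)
  qed
qed



lemma Cset:
  assumes "0 \<le> y"
  shows "{k::nat. real k \<le> y} = {..< nat \<lfloor>y\<rfloor> + 1}"
proof -
  have "real k \<le> y \<longleftrightarrow> k < nat \<lfloor>y\<rfloor> + 1" for k
  proof -
    have "real k \<le> y \<longleftrightarrow> int k \<le> \<lfloor>y\<rfloor>" by (simp add: le_floor_iff)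
    also have "\<dots> \<longleftrightarrow> k \<le> nat \<lfloor>y\<rfloor>" using assms by linarith
    finally show ?thesis by (simp add: less_Suc_eq_le)
  qed
  then show ?thesis by auto
qed

lemma avg_interval:
  fixes b :: "nat \<Rightarrow> real"
  assumes lim: "(\<lambda>N. (1/real N) * (\<Sum>k<N. b k)) \<longlonglongrightarrow> L" and a: "0 \<le> a"
  shows "(\<lambda>n. (1/real n) * (\<Sum>k\<in>{k. real k \<le> real n * a}. b k)) \<longlonglongrightarrow> a * L"
proof -
  define N where "N n = nat \<lfloor>real n * a\<rfloor> + 1" for n
  have C: "{k. real k \<le> real n * a} = {..<N n}" for n
    unfolding N_def by (rule Cset) (use a in simp)
  have Nbd: "real n * a < real (N n)" "real (N n) \<le> real n * a + 1" for n
  proof -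
    have "0 \<le> real n * a" using a by simp
    then have e: "real (N n) = real_of_int \<lfloor>real n * a\<rfloor> + 1" unfolding N_def by simp
    show "real n * a < real (N n)" unfolding e by linarith
    show "real (N n) \<le> real n * a + 1" unfolding e by linarith
  qed
  show ?thesis
  proof (cases "a = 0")
    case True
    have "N n = 1" for n unfolding N_def True by simp
    then have "(\<lambda>n. (1/real n) * (\<Sum>k\<in>{k. real k \<le> real n * a}. b k)) = (\<lambda>n. b 0 / real n)"
      unfolding C by (auto simp: fun_eq_iff)
    then show ?thesis using lim_const_over_n[of "b 0"] True by simp
  next
    case False
    then have apos: "0 < a" using a by simp
    have r: "(\<lambda>n. real (N n) / real n) \<longlonglongrightarrow> a"
    proof (rule real_tendsto_sandwich)
      show "\<forall>\<^sub>F n in sequentially. a \<le> real (N n) / real n"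
        using eventually_gt_at_top[of 0]
        by eventually_elim (use Nbd in \<open>auto simp: field_simps less_imp_le\<close>)
      show "\<forall>\<^sub>F n in sequentially. real (N n) / real n \<le> a + 1 / real n"
        using eventually_gt_at_top[of 0]
        by eventually_elim (use Nbd in \<open>auto simp: field_simps\<close>)
      show "(\<lambda>n. a) \<longlonglongrightarrow> a" by simp
      show "(\<lambda>n. a + 1 / real n) \<longlonglongrightarrow> a"
        using tendsto_add[OF tendsto_const[of a] lim_const_over_n[of 1]] by simp
    qed
    have Ninf: "filterlim N at_top sequentially"
      unfolding filterlim_at_top
    proof
      fix Z :: nat
      obtain n0 :: nat where n0: "real Z / a < real n0" using reals_Archimedean2 by blast
      show "\<forall>\<^sub>F n in sequentially. Z \<le> N n"
        unfolding eventually_sequentially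
      proof (intro exI[of _ n0] allI impI)
        fix n assume "n0 \<le> n"
        then have "real Z / a < real n" using n0 by linarith
        then have "real Z < real n * a" using apos by (simp add: field_simps)
        then have "real Z < real (N n)" using Nbd(1)[of n] by linarith
        then show "Z \<le> N n" by simp
      qed
    qed
    have av: "(\<lambda>n. (1/real (N n)) * (\<Sum>k<N n. b k)) \<longlonglongrightarrow> L"
      using filterlim_compose[OF lim Ninf] by (simp add: o_def)
    have "(\<lambda>n. (real (N n) / real n) * ((1/real (N n)) * (\<Sum>k<N n. b k))) \<longlonglongrightarrow> a * L"
      by (rule tendsto_mult[OF r av])
    moreover have "(real (N n) / real n) * ((1/real (N n)) * (\<Sum>k<N n. b k)) = (1/real n) * (\<Sum>k\<in>{k. real k \<le> real n * a}. b k)" for n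
      unfolding C N_def by simp
    ultimately show ?thesis by simp
  qed
qed

lemma approx_lim:
  fixes a :: "nat \<Rightarrow> real"
  assumes "\<And>\<epsilon>. \<epsilon> > 0 \<Longrightarrow> \<exists>b c'. b \<longlonglongrightarrow> c' \<and> eventually (\<lambda>n. \<bar>a n - b n\<bar> \<le> \<epsilon>) sequentially \<and> \<bar>c - c'\<bar> \<le> \<epsilon>"
  shows "a \<longlonglongrightarrow> c"
proof (rule tendstoI)
  fix r :: real assume r: "r > 0"
  obtain b c' where b: "b \<longlonglongrightarrow> c'" "eventually (\<lambda>n. \<bar>a n - b n\<bar> \<le> r/4) sequentially" "\<bar>c - c'\<bar> \<le> r/4"
    using assms[of "r/4"] r by auto
  have "eventually (\<lambda>n. dist (b n) c' < r/4) sequentially" using tendstoD[OF b(1), of "r/4"] r by simp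
  with b(2) show "eventually (\<lambda>n. dist (a n) c < r) sequentially"
  proof eventually_elim
    case (elim n)
    then show ?case using b(3) r unfolding dist_real_def by linarith
  qed
qed



lemma ceil_block:
  assumes n: "0 < n" and h: "0 < h" and j: "1 \<le> j"
  shows "nat \<lceil>real k / real n / h\<rceil> = j \<longleftrightarrow> real n * (real (j - 1) * h) < real k \<and> real k \<le> real n * (real j * h)"
proof -
  define q where "q = real k / real n / h"
  have "nat \<lceil>q\<rceil> = j \<longleftrightarrow> \<lceil>q\<rceil> = int j"
  proof
    assume a: "nat \<lceil>q\<rceil> = j"
    then have "0 < \<lceil>q\<rceil>" using j by (cases "\<lceil>q\<rceil> \<le> 0") auto
    then show "\<lceil>q\<rceil> = int j" using a by auto
  next
    assume "\<lceil>q\<rceil> = int j" then show "nat \<lceil>q\<rceil> = j" by simp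
  qed
  also have "\<dots> \<longleftrightarrow> real j - 1 < q \<and> q \<le> real j" by (simp add: ceiling_eq_iff)
  also have "real j - 1 < q \<longleftrightarrow> real n * (real (j - 1) * h) < real k"
    using n h j by (simp add: q_def of_nat_diff field_simps)
  also have "q \<le> real j \<longleftrightarrow> real k \<le> real n * (real j * h)"
    using n h by (simp add: q_def field_simps)
  finally show ?thesis unfolding q_def .
qed

lemma ceil_zero:
  assumes n: "0 < n" and h: "0 < h"
  shows "nat \<lceil>real k / real n / h\<rceil> = 0 \<longleftrightarrow> k = 0"
proof -
  have "nat \<lceil>real k / real n / h\<rceil> = 0 \<longleftrightarrow> real k / real n / h \<le> 0" by (simp add: ceiling_le_zero)
  also have "\<dots> \<longleftrightarrow> k = 0"
  proof -
    have "\<not> real n * h \<le> 0" using n h by (metis mult_pos_pos not_le of_nat_0_less_iff)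
    then show ?thesis using n h by (simp add: divide_le_0_iff)
  qed
  finally show ?thesis .
qed

lemma core:
  fixes f :: "'v::metric_space \<Rightarrow> real \<Rightarrow> real" and F :: "'v \<Rightarrow> real"
    and p :: "real \<Rightarrow> 'v" and u :: "nat \<Rightarrow> real \<Rightarrow> 'v" and e :: "nat \<Rightarrow> real"
  assumes T: "T > 0"
    and fm: "\<And>\<epsilon>. \<epsilon> > 0 \<Longrightarrow> \<exists>\<delta>>0. \<forall>a b y. dist a b < \<delta> \<longrightarrow> \<bar>f a y - f b y\<bar> < \<epsilon>"
    and Fm: "\<And>\<epsilon> \<delta> a b. (\<forall>a b y. dist a b < \<delta> \<longrightarrow> \<bar>f a y - f b y\<bar> < \<epsilon>) \<Longrightarrow> dist a b < \<delta> \<Longrightarrow> \<bar>F a - F b\<bar> \<le> \<epsilon>"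
    and D: "\<And>y \<epsilon>. \<epsilon> > 0 \<Longrightarrow> \<exists>z\<in>D. dist z y < \<epsilon>"
    and birk: "\<And>y. y \<in> D \<Longrightarrow> (\<lambda>N. (1/real N) * (\<Sum>k<N. f y (e k))) \<longlonglongrightarrow> F y"
    and pc: "continuous_on {0..T} p"
    and ul: "uniform_limit {0..T} u p sequentially"
  shows "(\<lambda>n. (1/real n) * (\<Sum>k\<in>{k. real k \<le> real n * T}. f (u n (real k / real n)) (e k)))
           \<longlonglongrightarrow> integral {0..T} (\<lambda>t. F (p t))"
proof (rule approx_lim)
  fix \<epsilon> :: real assume \<epsilon>: "\<epsilon> > 0"
  define \<epsilon>1 where "\<epsilon>1 = \<epsilon> / (T + 1)"
  have \<epsilon>1: "\<epsilon>1 > 0" using \<epsilon> T by (simp add: \<epsilon>1_def)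
  have \<epsilon>1T: "(T + 1) * \<epsilon>1 = \<epsilon>" using T by (simp add: \<epsilon>1_def)
  obtain \<delta> where \<delta>: "\<delta> > 0" "\<forall>a b y. dist a b < \<delta> \<longrightarrow> \<bar>f a y - f b y\<bar> < \<epsilon>1" using fm[OF \<epsilon>1] by auto
  have F\<delta>: "\<bar>F a - F b\<bar> \<le> \<epsilon>1" if "dist a b < \<delta>" for a b using Fm[OF \<delta>(2) that] .
  have uc: "uniformly_continuous_on {0..T} p" using pc by (rule compact_uniformly_continuous) simp
  obtain d where d: "d > 0" "\<forall>s\<in>{0..T}. \<forall>t\<in>{0..T}. dist t s < d \<longrightarrow> dist (p t) (p s) < \<delta>/3"
    using uc[unfolded uniformly_continuous_on_def, rule_format, of "\<delta>/3"] \<delta>(1) by auto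
  obtain m :: nat where m: "T / d < real m" using reals_Archimedean2 by blast
  have m0: "m > 0" using m T d(1) by (cases m) (auto simp: field_simps)
  define h where "h = T / real m"
  have h: "h > 0" "h < d" using m m0 T d(1) by (auto simp: h_def field_simps)
  have mh: "real m * h = T" using m0 by (simp add: h_def)
  define tt where "tt j = real j * h" for j
  have "\<forall>j. \<exists>z. z \<in> D \<and> dist z (p (tt j)) < \<delta>/3" using D \<delta>(1) by (meson zero_less_divide_iff zero_less_numeral)
  then obtain yy where yy: "\<And>j. yy j \<in> D" "\<And>j. dist (yy j) (p (tt j)) < \<delta>/3" by metis
  define J where "J t = nat \<lceil>t / h\<rceil>" for t
  have J: "J t \<le> m \<and> tt (J t) \<in> {0..T} \<and> tt (J t) - h < t \<and> t \<le> tt (J t)" if t: "t \<in> {0..T}" for t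
  proof -
    have t0: "0 \<le> t / h" using t h by auto
    have tm: "t / h \<le> real m" using t h mh by (auto simp: field_simps)
    then have c1: "\<lceil>t / h\<rceil> \<le> int m" by (metis ceiling_le of_int_of_nat_eq)
    have c2: "t / h \<le> \<lceil>t / h\<rceil>" "\<lceil>t / h\<rceil> < t / h + 1" by linarith+
    have JJ: "real (J t) = real_of_int \<lceil>t / h\<rceil>" unfolding J_def using t0 by simp
    have "J t \<le> m" using tm unfolding J_def by simp
    moreover have "tt (J t) = real_of_int \<lceil>t / h\<rceil> * h" unfolding tt_def JJ ..
    moreover have "t \<le> real_of_int \<lceil>t / h\<rceil> * h" using mult_right_mono[OF c2(1) less_imp_le[OF h(1)]] h(1) by simp
    moreover have "real_of_int \<lceil>t / h\<rceil> * h < t + h" using mult_strict_right_mono[OF c2(2) h(1)] h(1) by (simp add: distrib_right)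
    moreover have "real_of_int \<lceil>t / h\<rceil> * h \<le> T" using c1 h mh
      by (metis mult_right_mono of_int_le_iff of_int_of_nat_eq less_imp_le)
    ultimately show ?thesis using t by auto
  qed
  have near: "dist (yy (J t)) (p t) < 2*\<delta>/3" if t: "t \<in> {0..T}" for t
  proof -
    have "dist (tt (J t)) t < d" using J[OF t] h by (auto simp: dist_real_def)
    then have "dist (p (tt (J t))) (p t) < \<delta>/3" using d(2) J[OF t] t by blast
    then show ?thesis using yy(2)[of "J t"] dist_triangle[of "yy (J t)" "p t" "p (tt (J t))"] by simp
  qed
  define C where "C n s = {k::nat. real k \<le> real n * s}" for n s
  have Cfin: "finite (C n s)" if "0 \<le> s" for n s
    unfolding C_def using Cset[of "real n * s"] that by simp
  define b where "b n = (1/real n) * (\<Sum>k\<in>C n T. f (yy (J (real k / real n))) (e k))" for n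
  define c' where "c' = (\<Sum>j<m. h * F (yy (Suc j)))"
  show "\<exists>b c'. b \<longlonglongrightarrow> c' \<and> (\<forall>\<^sub>F n in sequentially. \<bar>(1/real n) * (\<Sum>k\<in>{k. real k \<le> real n * T}. f (u n (real k / real n)) (e k)) - b n\<bar> \<le> \<epsilon>)
      \<and> \<bar>integral {0..T} (\<lambda>t. F (p t)) - c'\<bar> \<le> \<epsilon>"
  proof (intro exI conjI)
    show "b \<longlonglongrightarrow> c'"
    proof -
      define H where "H y s n = (1/real n) * (\<Sum>k\<in>C n s. f y (e k))" for y s n
      have Hlim: "(H (yy j) (tt i)) \<longlonglongrightarrow> tt i * F (yy j)" for j i
        unfolding H_def C_def by (rule avg_interval[OF birk[OF yy(1)]]) (simp add: tt_def h less_imp_le)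
      define P where "P j n = (if j = 0 then f (yy 0) (e 0) / real n else H (yy j) (tt j) n - H (yy j) (tt (j-1)) n)" for j n
      have Plim: "(P j) \<longlonglongrightarrow> (if j = 0 then 0 else h * F (yy j))" for j
      proof (cases "j = 0")
        case True then show ?thesis unfolding P_def using lim_const_over_n[of "f (yy 0) (e 0)"] by simp
      next
        case False
        have "(\<lambda>n. H (yy j) (tt j) n - H (yy j) (tt (j-1)) n) \<longlonglongrightarrow> tt j * F (yy j) - tt (j-1) * F (yy j)"
          by (rule tendsto_diff[OF Hlim Hlim])
        moreover have "tt j * F (yy j) - tt (j-1) * F (yy j) = h * F (yy j)"
          using False by (simp add: tt_def of_nat_diff algebra_simps)
        ultimately show ?thesis unfolding P_def using False by simp
      qed
      have sumlim: "(\<lambda>n. \<Sum>j\<le>m. P j n) \<longlonglongrightarrow> (\<Sum>j\<le>m. if j = 0 then 0 else h * F (yy j))"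
        by (rule tendsto_sum) (rule Plim)
      have c'eq: "(\<Sum>j\<le>m. if j = 0 then 0 else h * F (yy j)) = c'"
        unfolding c'_def by (simp add: sum.atMost_shift)
      have eq: "\<forall>\<^sub>F n in sequentially. (\<Sum>j\<le>m. P j n) = b n"
        using eventually_gt_at_top[of "0::nat"]
      proof eventually_elim
        case (elim n)
        have fin: "finite (C n T)" using Cfin T by simp
        have kin: "real k / real n \<in> {0..T}" if "k \<in> C n T" for k
          using that elim by (auto simp: C_def field_simps)
        have img: "(\<lambda>k. J (real k / real n)) ` C n T \<subseteq> {..m}" using J kin by auto
        have "b n = (1/real n) * (\<Sum>j\<le>m. \<Sum>k\<in>{k. k \<in> C n T \<and> J (real k / real n) = j}. f (yy (J (real k / real n))) (e k))"
          unfolding b_def sum.group[OF fin finite_atMost img] ..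
        also have "\<dots> = (1/real n) * (\<Sum>j\<le>m. \<Sum>k\<in>{k. k \<in> C n T \<and> J (real k / real n) = j}. f (yy j) (e k))"
          by (intro arg_cong[where f="\<lambda>x. (1/real n) * x"] sum.cong refl) auto
        also have "\<dots> = (\<Sum>j\<le>m. (1/real n) * (\<Sum>k\<in>{k. k \<in> C n T \<and> J (real k / real n) = j}. f (yy j) (e k)))"
          by (rule sum_distrib_left)
        also have "\<dots> = (\<Sum>j\<le>m. P j n)"
        proof (rule sum.cong[OF refl])
          fix j assume j: "j \<in> {..m}"
          show "(1/real n) * (\<Sum>k\<in>{k. k \<in> C n T \<and> J (real k / real n) = j}. f (yy j) (e k)) = P j n"
          proof (cases "j = 0")
            case True
            have "k \<in> C n T \<and> J (real k / real n) = j \<longleftrightarrow> k = 0" for k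
            proof -
              have "J (real k / real n) = 0 \<longleftrightarrow> k = 0" unfolding J_def by (rule ceil_zero[OF elim h(1)])
              moreover have "0 \<in> C n T" using T by (simp add: C_def)
              ultimately show ?thesis using True by blast
            qed
            then have "{k. k \<in> C n T \<and> J (real k / real n) = j} = {0}" by blast
            then show ?thesis using True by (simp add: P_def)
          next
            case False
            have sub: "C n (tt (j-1)) \<subseteq> C n (tt j)"
            proof -
              have "real n * (real (j-1) * h) \<le> real n * (real j * h)"
                by (intro mult_left_mono mult_right_mono) (use h in auto)
              then show ?thesis unfolding C_def tt_def by auto
            qed
            have ttT: "tt j \<le> T" using j h(1) mh unfolding tt_def
              by (metis atMost_iff mult_right_mono of_nat_le_iff less_imp_le)
            have "{k. k \<in> C n T \<and> J (real k / real n) = j} = C n (tt j) - C n (tt (j-1))"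
            proof -
              have "k \<in> C n T \<and> J (real k / real n) = j \<longleftrightarrow> k \<in> C n (tt j) - C n (tt (j-1))" for k
              proof -
                have "J (real k / real n) = j \<longleftrightarrow> real n * (real (j - 1) * h) < real k \<and> real k \<le> real n * (real j * h)"
                  unfolding J_def using ceil_block[OF elim h(1), of j k] False by simp
                moreover have "real n * (real j * h) \<le> real n * T" using ttT by (simp add: tt_def mult_left_mono)
                moreover have "k \<in> C n (tt j) - C n (tt (j-1)) \<longleftrightarrow> real k \<le> real n * (real j * h) \<and> \<not> real k \<le> real n * (real (j-1) * h)"
                  by (simp add: C_def tt_def)
                moreover have "k \<in> C n T \<longleftrightarrow> real k \<le> real n * T" by (simp add: C_def)
                ultimately show ?thesis by (smt (verit))
              qed
              then show ?thesis by blast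
            qed
            then have "(\<Sum>k\<in>{k. k \<in> C n T \<and> J (real k / real n) = j}. f (yy j) (e k))
                 = (\<Sum>k\<in>C n (tt j). f (yy j) (e k)) - (\<Sum>k\<in>C n (tt (j-1)). f (yy j) (e k))"
              using sum_diff[OF Cfin sub] h(1) by (simp add: tt_def)
            then show ?thesis using False by (simp add: P_def H_def right_diff_distrib)
          qed
        qed
        finally show ?case ..
      qed
      show ?thesis using Lim_transform_eventually[OF sumlim eq] c'eq by simp
    qed
    show "\<forall>\<^sub>F n in sequentially. \<bar>(1/real n) * (\<Sum>k\<in>{k. real k \<le> real n * T}. f (u n (real k / real n)) (e k)) - b n\<bar> \<le> \<epsilon>"
    proof -
      have "\<forall>\<^sub>F n in sequentially. \<forall>t\<in>{0..T}. dist (u n t) (p t) < \<delta>/3"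
        using uniform_limitD[OF ul, of "\<delta>/3"] \<delta>(1) by simp
      moreover have "\<forall>\<^sub>F n in sequentially. n > 0" by (rule eventually_gt_at_top)
      ultimately show ?thesis
      proof eventually_elim
        case (elim n)
        have CT: "{k. real k \<le> real n * T} = C n T" by (simp add: C_def)
        have fin: "finite (C n T)" using Cfin T by simp
        have pt: "\<bar>f (u n (real k / real n)) (e k) - f (yy (J (real k / real n))) (e k)\<bar> \<le> \<epsilon>1" if "k \<in> C n T" for k
        proof -
          let ?t = "real k / real n"
          have kin: "?t \<in> {0..T}" using that elim(2) by (auto simp: C_def field_simps)
          have "dist (u n ?t) (yy (J ?t)) \<le> dist (u n ?t) (p ?t) + dist (p ?t) (yy (J ?t))"
            by (rule dist_triangle)
          also have "\<dots> < \<delta>"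
          proof -
            have "dist (u n ?t) (p ?t) < \<delta>/3" using elim(1) kin by blast
            moreover have "dist (p ?t) (yy (J ?t)) < 2*\<delta>/3" using near[OF kin] by (simp add: dist_commute)
            ultimately show ?thesis by linarith
          qed
          finally show ?thesis using \<delta>(2) by (simp add: less_imp_le)
        qed
        have "\<bar>(1/real n) * (\<Sum>k\<in>C n T. f (u n (real k / real n)) (e k)) - b n\<bar>
            = (1/real n) * \<bar>\<Sum>k\<in>C n T. (f (u n (real k / real n)) (e k) - f (yy (J (real k / real n))) (e k))\<bar>"
        proof -
          have aux: "\<bar>x / real n - y / real n\<bar> = \<bar>x - y\<bar> / real n" for x y
            by (simp add: diff_divide_distrib[symmetric] abs_divide)
          show ?thesis unfolding b_def by (simp add: sum_subtractf aux)
        qed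
        also have "\<dots> \<le> (1/real n) * (\<Sum>k\<in>C n T. \<epsilon>1)"
          by (intro mult_left_mono order_trans[OF sum_abs sum_mono]) (auto simp: pt)
        also have "\<dots> = real (card (C n T)) * \<epsilon>1 / real n" by simp
        also have "\<dots> \<le> (T + 1) * \<epsilon>1"
        proof -
          have "C n T = {..< nat \<lfloor>real n * T\<rfloor> + 1}" unfolding C_def by (rule Cset) (use T in simp)
          then have "real (card (C n T)) = real (nat \<lfloor>real n * T\<rfloor>) + 1" by simp
          also have "\<dots> \<le> real n * T + 1"
          proof -
            have "real (nat \<lfloor>real n * T\<rfloor>) = real_of_int \<lfloor>real n * T\<rfloor>" using T by simp
            moreover have "real_of_int \<lfloor>real n * T\<rfloor> \<le> real n * T" by (rule of_int_floor_le)
            ultimately show ?thesis by linarith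
          qed
          also have "\<dots> \<le> real n * (T + 1)" using elim(2) by (simp add: algebra_simps)
          finally have "real (card (C n T)) * \<epsilon>1 \<le> real n * (T + 1) * \<epsilon>1" using \<epsilon>1 by (simp add: mult_right_mono)
          then show ?thesis using elim(2) by (simp add: pos_divide_le_eq mult_ac)
        qed
        finally show ?case using \<epsilon>1T CT by simp
      qed
    qed
    show "\<bar>integral {0..T} (\<lambda>t. F (p t)) - c'\<bar> \<le> \<epsilon>"
    proof -
      have Fc: "continuous_on UNIV F"
        unfolding continuous_on_iff
      proof (intro ballI allI impI)
        fix x0 and r :: real assume r: "r > 0"
        obtain \<delta>' where \<delta>': "\<delta>' > 0" "\<forall>a b y. dist a b < \<delta>' \<longrightarrow> \<bar>f a y - f b y\<bar> < r/2"
          using fm[of "r/2"] r by auto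
        have "dist (F x') (F x0) < r" if "dist x' x0 < \<delta>'" for x'
          using Fm[OF \<delta>'(2) that] r by (simp add: dist_real_def)
        then show "\<exists>d>0. \<forall>x'\<in>UNIV. dist x' x0 < d \<longrightarrow> dist (F x') (F x0) < r"
          using \<delta>'(1) by blast
      qed
      have Fpc: "continuous_on {0..T} (\<lambda>t. F (p t))"
        by (rule continuous_on_compose2[OF Fc pc]) auto
      have ttle: "tt j \<le> T" if "j \<le> m" for j
      proof -
        have "real j * h \<le> real m * h" using that h(1) by (simp add: mult_right_mono)
        then show ?thesis using mh by (simp add: tt_def)
      qed
      have tt0: "0 \<le> tt j" for j using h(1) by (simp add: tt_def)
      have ttS: "tt (Suc j) = tt j + h" for j by (simp add: tt_def algebra_simps)
      have piece: "\<bar>integral {tt j..tt (Suc j)} (\<lambda>t. F (p t)) - h * F (yy (Suc j))\<bar> \<le> \<epsilon>1 * h" if j: "j < m" for j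
      proof -
        have sub: "{tt j..tt (Suc j)} \<subseteq> {0..T}" using ttle[of "Suc j"] j tt0[of j] by auto
        have le: "tt j \<le> tt (Suc j)" using ttS h(1) by simp
        have cont: "continuous_on {tt j..tt (Suc j)} (\<lambda>t. F (p t) - F (yy (Suc j)))"
          using continuous_on_subset[OF Fpc sub] by (intro continuous_intros)
        have bd: "norm (F (p t) - F (yy (Suc j))) \<le> \<epsilon>1" if t: "t \<in> {tt j..tt (Suc j)}" for t
        proof -
          have t0T: "t \<in> {0..T}" "tt (Suc j) \<in> {0..T}" using sub t le by auto
          have "dist (tt (Suc j)) t < d" using t ttS h by (auto simp: dist_real_def)
          then have "dist (p (tt (Suc j))) (p t) < \<delta>/3" using d(2) t0T by blast
          then have a: "dist (p t) (p (tt (Suc j))) < \<delta>/3" by (simp add: dist_commute)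
          have b: "dist (yy (Suc j)) (p (tt (Suc j))) < \<delta>/3" by (rule yy(2))
          have c: "dist (p t) (yy (Suc j)) \<le> dist (p t) (p (tt (Suc j))) + dist (p (tt (Suc j))) (yy (Suc j))"
            by (rule dist_triangle)
          have e: "dist (p (tt (Suc j))) (yy (Suc j)) = dist (yy (Suc j)) (p (tt (Suc j)))" by (rule dist_commute)
          have "dist (p t) (yy (Suc j)) < \<delta>" using a b c e \<delta>(1) by linarith
          then show ?thesis using F\<delta> by simp
        qed
        have i1: "(\<lambda>t. F (p t)) integrable_on {tt j..tt (Suc j)}"
          by (rule integrable_continuous_interval) (rule continuous_on_subset[OF Fpc sub])
        have "integral {tt j..tt (Suc j)} (\<lambda>t. F (p t) - F (yy (Suc j)))
              = integral {tt j..tt (Suc j)} (\<lambda>t. F (p t)) - h * F (yy (Suc j))"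
        proof -
          have "integral {tt j..tt (Suc j)} (\<lambda>t. F (p t) - F (yy (Suc j)))
              = integral {tt j..tt (Suc j)} (\<lambda>t. F (p t)) - integral {tt j..tt (Suc j)} (\<lambda>t. F (yy (Suc j)))"
            by (rule integral_diff[OF i1 integrable_const_ivl])
          moreover have "integral {tt j..tt (Suc j)} (\<lambda>t. F (yy (Suc j))) = h * F (yy (Suc j))"
            using le ttS[of j] by simp
          ultimately show ?thesis by simp
        qed
        moreover have "norm (integral {tt j..tt (Suc j)} (\<lambda>t. F (p t) - F (yy (Suc j)))) \<le> \<epsilon>1 * (tt (Suc j) - tt j)"
          by (rule integral_bound[OF le cont bd])
        ultimately show ?thesis using ttS by simp
      qed
      have split: "integral {0..tt i} (\<lambda>t. F (p t)) = (\<Sum>j<i. integral {tt j..tt (Suc j)} (\<lambda>t. F (p t)))"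
        if "i \<le> m" for i
        using that
      proof (induction i)
        case 0 then show ?case by (simp add: tt_def)
      next
        case (Suc i)
        have int: "(\<lambda>t. F (p t)) integrable_on {0..tt (Suc i)}"
          by (rule integrable_continuous_interval)
             (rule continuous_on_subset[OF Fpc], use ttle[OF Suc.prems] in auto)
        have "integral {0..tt (Suc i)} (\<lambda>t. F (p t)) = integral {0..tt i} (\<lambda>t. F (p t)) + integral {tt i..tt (Suc i)} (\<lambda>t. F (p t))"
          by (rule Henstock_Kurzweil_Integration.integral_combine[OF tt0 _ int, symmetric]) (use ttS h(1) in simp)
        then show ?case using Suc by simp
      qed
      have "tt m = T" using mh by (simp add: tt_def)
      then have eqS: "integral {0..T} (\<lambda>t. F (p t)) - c' = (\<Sum>j<m. integral {tt j..tt (Suc j)} (\<lambda>t. F (p t)) - h * F (yy (Suc j)))"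
        using split[of m] by (simp add: c'_def sum_subtractf)
      have "\<bar>integral {0..T} (\<lambda>t. F (p t)) - c'\<bar>
          \<le> (\<Sum>j<m. \<bar>integral {tt j..tt (Suc j)} (\<lambda>t. F (p t)) - h * F (yy (Suc j))\<bar>)"
        unfolding eqS by (rule sum_abs)
      also have "\<dots> \<le> (\<Sum>j<m. \<epsilon>1 * h)"
        by (rule sum_mono) (rule piece, simp)
      also have "\<dots> = \<epsilon>1 * T" using mh by (simp add: mult_ac)
      also have "\<dots> \<le> \<epsilon>" using \<epsilon>1T \<epsilon>1 by (simp add: algebra_simps)
      finally show ?thesis .
    qed
  qed
qed



lemma birkhoff:
  fixes g :: "real \<Rightarrow> real"
  assumes P: "prob_space M" and st: "stationary_seq M \<eta>" and erg: "ergodic_seq M \<eta>"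
    and g[measurable]: "g \<in> borel_measurable borel"
    and Kg: "\<And>y. \<bar>g y\<bar> \<le> K"
  shows "AE \<omega> in M. (\<lambda>n. (1/real n) * (\<Sum>k<n. g (\<eta> k \<omega>))) \<longlonglongrightarrow> prob_space.expectation M (\<lambda>\<omega>. g (\<eta> 0 \<omega>))"
proof -
  interpret prob_space M by fact
  define E where "E = expectation (\<lambda>\<omega>. g (\<eta> 0 \<omega>))"
  have up: "AE \<omega> in M. \<forall>j::nat. eventually (\<lambda>n. (1/real n) * (\<Sum>k<n. g (\<eta> k \<omega>)) < E + 1 / real (Suc j)) sequentially"
    unfolding AE_all_countable
  proof
    fix j :: nat
    show "AE \<omega> in M. eventually (\<lambda>n. (1/real n) * (\<Sum>k<n. g (\<eta> k \<omega>)) < E + 1 / real (Suc j)) sequentially"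
      by (rule birk_upper[OF P st erg g Kg]) (simp add: E_def)
  qed
  have mg[measurable]: "(\<lambda>y. - g y) \<in> borel_measurable borel" by measurable
  have lo: "AE \<omega> in M. \<forall>j::nat. eventually (\<lambda>n. (1/real n) * (\<Sum>k<n. - g (\<eta> k \<omega>)) < - E + 1 / real (Suc j)) sequentially"
    unfolding AE_all_countable
  proof
    fix j :: nat
    show "AE \<omega> in M. eventually (\<lambda>n. (1/real n) * (\<Sum>k<n. - g (\<eta> k \<omega>)) < - E + 1 / real (Suc j)) sequentially"
      by (rule birk_upper[OF P st erg mg, of K]) (use Kg in \<open>simp_all add: E_def\<close>)
  qed
  from up lo show ?thesis
  proof eventually_elim
    case (elim \<omega>)
    show ?case unfolding E_def[symmetric]
    proof (rule tendstoI)
      fix r :: real assume r: "r > 0"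
      obtain j where j: "inverse (real (Suc j)) < r" using reals_Archimedean[OF r] by blast
      from elim(1)[rule_format, of j] elim(2)[rule_format, of j]
      show "eventually (\<lambda>n. dist ((1/real n) * (\<Sum>k<n. g (\<eta> k \<omega>))) E < r) sequentially"
      proof eventually_elim
        case (elim n)
        have "(1/real n) * (\<Sum>k<n. - g (\<eta> k \<omega>)) = - ((1/real n) * (\<Sum>k<n. g (\<eta> k \<omega>)))"
          by (simp add: sum_negf)
        then show ?case using elim j by (simp add: dist_real_def abs_less_iff inverse_eq_divide)
      qed
    qed
  qed
qed

theorem lemma3:
  fixes M :: "'a measure"
    and f :: "(real^('d::finite)) \<times> real \<Rightarrow> real"
    and \<eta> :: "nat \<Rightarrow> 'a \<Rightarrow> real"
    and \<xi>n :: "nat \<Rightarrow> real \<Rightarrow> 'a \<Rightarrow> real^'d"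
    and \<xi> :: "real \<Rightarrow> 'a \<Rightarrow> real^'d"
  assumes "prob_space M"
    and "bounded (range f)"
    and "uniformly_continuous_on UNIV f"
    and "stationary_seq M \<eta>"
    and "ergodic_seq M \<eta>"
    and "\<And>n t. \<xi>n n t \<in> borel_measurable M"
    and "\<And>n \<omega>. \<omega> \<in> space M \<Longrightarrow> continuous_on {0..} (\<lambda>t. \<xi>n n t \<omega>)"
    and "\<And>t. \<xi> t \<in> borel_measurable M"
    and "\<And>T. T > 0 \<Longrightarrow>
           AE \<omega> in M. uniform_limit {0..T} (\<lambda>n t. \<xi>n n t \<omega>) (\<lambda>t. \<xi> t \<omega>) sequentially"
  shows "\<forall>T>0. AE \<omega> in M.
           (\<lambda>n. (1 / real n) * (\<Sum>k \<in> {k. real k \<le> real n * T}. f (\<xi>n n (real k / real n) \<omega>, \<eta> k \<omega>)))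
             \<longlonglongrightarrow> integral {0..T} (\<lambda>t. prob_space.expectation M (\<lambda>\<omega>'. f (\<xi> t \<omega>, \<eta> 0 \<omega>')))"
proof (intro allI impI)
  fix T :: real assume T: "T > 0"
  note P = assms(1) and st = assms(4) and erg = assms(5) and xic = assms(7) and ul = assms(9)
  interpret prob_space M by fact
  have eta[measurable]: "\<And>k. \<eta> k \<in> borel_measurable M" using st by (rule stat_meas)
  obtain B where B: "\<And>z. \<bar>f z\<bar> \<le> B" using assms(2) unfolding bounded_iff by auto
  have fc: "continuous_on UNIV f" using assms(3) by (rule uniformly_continuous_imp_continuous)
  define F where "F a = expectation (\<lambda>\<omega>'. f (a, \<eta> 0 \<omega>'))" for a
  have gc: "continuous_on UNIV (\<lambda>z. f (y, z))" for y
    by (rule continuous_on_compose2[OF fc]) (auto intro: continuous_intros)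
  have gm[measurable]: "(\<lambda>z. f (y, z)) \<in> borel_measurable borel" for y
    by (rule borel_measurable_continuous_onI[OF gc])
  obtain D :: "(real^'d) set" where D: "countable D" "\<And>X. open X \<Longrightarrow> X \<noteq> {} \<Longrightarrow> \<exists>d\<in>D. d \<in> X"
    by (rule countable_dense_setE) blast
  have Dd: "\<exists>z\<in>D. dist z y < \<epsilon>" if "\<epsilon> > 0" for y \<epsilon>
    using D(2)[of "ball y \<epsilon>"] that by (auto simp: dist_commute)
  have aeB: "AE \<omega> in M. \<forall>y\<in>D. (\<lambda>N. (1/real N) * (\<Sum>k<N. f (y, \<eta> k \<omega>))) \<longlonglongrightarrow> F y"
    unfolding AE_ball_countable[OF D(1)]
  proof
    fix y assume "y \<in> D"
    show "AE \<omega> in M. (\<lambda>N. (1/real N) * (\<Sum>k<N. f (y, \<eta> k \<omega>))) \<longlonglongrightarrow> F y"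
      unfolding F_def by (rule birkhoff[OF P st erg gm[of y], of B]) (rule B)
  qed
  have fm: "\<exists>\<delta>>0. \<forall>a b y. dist a b < \<delta> \<longrightarrow> \<bar>f (a, y) - f (b, y)\<bar> < \<epsilon>" if \<epsilon>: "\<epsilon> > 0" for \<epsilon>
  proof -
    obtain \<delta> where \<delta>: "\<delta> > 0" "\<forall>x\<in>UNIV. \<forall>x'\<in>UNIV. dist x' x < \<delta> \<longrightarrow> dist (f x') (f x) < \<epsilon>"
      using assms(3)[unfolded uniformly_continuous_on_def, rule_format, OF \<epsilon>] by blast
    have "\<bar>f (a, y) - f (b, y)\<bar> < \<epsilon>" if "dist a b < \<delta>" for a b y
    proof -
      have "dist (a, y) (b, y) = dist a b" by (simp add: dist_Pair_Pair)
      then show ?thesis using \<delta>(2) that by (fastforce simp: dist_real_def)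
    qed
    then show ?thesis using \<delta>(1) by blast
  qed
  have Fm: "\<bar>F a - F b\<bar> \<le> \<epsilon>"
    if h: "\<forall>a b y. dist a b < \<delta> \<longrightarrow> \<bar>f (a, y) - f (b, y)\<bar> < \<epsilon>" and ab: "dist a b < \<delta>" for \<epsilon> \<delta> a b
  proof -
    have int: "integrable M (\<lambda>\<omega>'. f (c, \<eta> 0 \<omega>'))" for c
      by (rule integrable_const_bound[where B=B]) (simp_all add: B)
    have pw: "\<bar>f (a, \<eta> 0 \<omega>) - f (b, \<eta> 0 \<omega>)\<bar> \<le> \<epsilon>" for \<omega> using h ab by (simp add: less_imp_le)
    have "F a - F b = expectation (\<lambda>\<omega>. f (a, \<eta> 0 \<omega>) - f (b, \<eta> 0 \<omega>))"
      unfolding F_def by (simp add: int)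
    moreover have "expectation (\<lambda>\<omega>. f (a, \<eta> 0 \<omega>) - f (b, \<eta> 0 \<omega>)) \<le> \<epsilon>"
      by (rule integral_le_const) (use int pw in \<open>auto simp: abs_le_iff\<close>)
    moreover have "- \<epsilon> \<le> expectation (\<lambda>\<omega>. f (a, \<eta> 0 \<omega>) - f (b, \<eta> 0 \<omega>))"
    proof (rule integral_ge_const)
      have "- \<epsilon> \<le> f (a, \<eta> 0 \<omega>) - f (b, \<eta> 0 \<omega>)" for \<omega> using pw[of \<omega>] by linarith
      then show "AE \<omega> in M. - \<epsilon> \<le> f (a, \<eta> 0 \<omega>) - f (b, \<eta> 0 \<omega>)" by simp
    qed (use int in auto)
    ultimately show ?thesis by linarith
  qed
  from ul[OF T] aeB AE_space show "AE \<omega> in M.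
           (\<lambda>n. (1 / real n) * (\<Sum>k \<in> {k. real k \<le> real n * T}. f (\<xi>n n (real k / real n) \<omega>, \<eta> k \<omega>)))
             \<longlonglongrightarrow> integral {0..T} (\<lambda>t. prob_space.expectation M (\<lambda>\<omega>'. f (\<xi> t \<omega>, \<eta> 0 \<omega>')))"
  proof eventually_elim
    case (elim \<omega>)
    have pc: "continuous_on {0..T} (\<lambda>t. \<xi> t \<omega>)"
    proof (rule uniform_limit_theorem[OF _ elim(1)])
      show "\<forall>\<^sub>F n in sequentially. continuous_on {0..T} (\<lambda>t. \<xi>n n t \<omega>)"
      proof (rule always_eventually, rule allI)
        fix n show "continuous_on {0..T} (\<lambda>t. \<xi>n n t \<omega>)"
          by (rule continuous_on_subset[OF xic[OF elim(3)]]) auto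
      qed
    qed simp
    have "(\<lambda>n. (1/real n) * (\<Sum>k\<in>{k. real k \<le> real n * T}. (\<lambda>a y. f (a, y)) (\<xi>n n (real k / real n) \<omega>) (\<eta> k \<omega>)))
           \<longlonglongrightarrow> integral {0..T} (\<lambda>t. F (\<xi> t \<omega>))"
      by (rule core[where D=D, OF T _ _ _ _ pc elim(1)]) (use fm Fm Dd elim(2) in auto)
    then show ?case unfolding F_def by simp
  qed
qed

end
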